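(* Let $K$ be a cubical complex with $H^1(K;\mathbb{Z}/2\mathbb{Z})=0$. Then $K$ has a bicoloring.
   Context: A cubical poset is a poset $P$ in which every order ideal $\{z\in P: z\le x\}$ is isomorphic to a product of copies of $I$, where $I$ is the three-element face poset of an interval with the empty face excluded (two incomparable endpoints below a single maximum). A cubical complex is a (regular) cell complex whose face poset $P$ (excluding the empty face) is a cubical poset such that $P$ with a minimum and a maximum element adjoined is a lattice. A bicoloring of a complex is an assignment of one of two colors to each vertex such that every edge has one endpoint of each color (i.e., the 1-skeleton is bipartite with respect to the coloring). *)

theory Defs
  imports Main
begin

text \<open>I = {0,1,2} with 0 < 2 and 1 < 2 (two incomparable endpoints below a maximum).
  I^n is modelled as lists of length n over {0,1,2} with componentwise order.\<close>

definition I_le :: "nat \<Rightarrow> nat \<Rightarrow> bool" where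
  "I_le a b \<longleftrightarrow> a = b \<or> b = 2"

definition cube_elems :: "nat \<Rightarrow> nat list set" where
  "cube_elems n = {xs. length xs = n \<and> set xs \<subseteq> {0, 1, 2}}"

definition cube_le :: "nat list \<Rightarrow> nat list \<Rightarrow> bool" where
  "cube_le xs ys \<longleftrightarrow> list_all2 I_le xs ys"

definition order_ideal :: "'a set \<Rightarrow> 'a rel \<Rightarrow> 'a \<Rightarrow> 'a set" where
  "order_ideal P r x = {z \<in> P. (z, x) \<in> r}"

definition cell_dim :: "'a set \<Rightarrow> 'a rel \<Rightarrow> 'a \<Rightarrow> nat \<Rightarrow> bool" where
  "cell_dim P r x n \<longleftrightarrow> x \<in> P \<and>
     (\<exists>f. bij_betw f (order_ideal P r x) (cube_elems n) \<and>
          (\<forall>z \<in> order_ideal P r x. \<forall>w \<in> order_ideal P r x.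
              (z, w) \<in> r \<longleftrightarrow> cube_le (f z) (f w)))"

definition cubical_poset :: "'a set \<Rightarrow> 'a rel \<Rightarrow> bool" where
  "cubical_poset P r \<longleftrightarrow> partial_order_on P r \<and> (\<forall>x \<in> P. \<exists>n. cell_dim P r x n)"

datatype 'a bounded_ext = Bot | Elt 'a | Top

fun ext_le :: "'a rel \<Rightarrow> 'a bounded_ext \<Rightarrow> 'a bounded_ext \<Rightarrow> bool" where
  "ext_le r Bot _ = True"
| "ext_le r (Elt x) (Elt y) = ((x, y) \<in> r)"
| "ext_le r (Elt x) Top = True"
| "ext_le r (Elt x) Bot = False"
| "ext_le r Top y = (y = Top)"

definition ext_carrier :: "'a set \<Rightarrow> 'a bounded_ext set" where
  "ext_carrier P = {Bot, Top} \<union> Elt ` P"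

definition is_lattice_on :: "'b set \<Rightarrow> ('b \<Rightarrow> 'b \<Rightarrow> bool) \<Rightarrow> bool" where
  "is_lattice_on S le \<longleftrightarrow> (\<forall>x \<in> S. \<forall>y \<in> S.
     (\<exists>z \<in> S. le x z \<and> le y z \<and> (\<forall>w \<in> S. le x w \<and> le y w \<longrightarrow> le z w)) \<and>
     (\<exists>z \<in> S. le z x \<and> le z y \<and> (\<forall>w \<in> S. le w x \<and> le w y \<longrightarrow> le w z)))"

text \<open>A cubical complex, represented by its face poset (empty face excluded).
  Every cubical poset is a CW poset, hence the face poset of a regular CW complex,
  which is determined up to homeomorphism by the poset.\<close>
definition cubical_complex :: "'a set \<Rightarrow> 'a rel \<Rightarrow> bool" where
  "cubical_complex P r \<longleftrightarrow> cubical_poset P r \<and> is_lattice_on (ext_carrier P) (ext_le r)"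

definition cells :: "'a set \<Rightarrow> 'a rel \<Rightarrow> nat \<Rightarrow> 'a set" where
  "cells P r k = {x. cell_dim P r x k}"

text \<open>Cellular k-cochains with values in Z/2 (represented by bool, True = 1):
  functions on the k-cells. For a regular complex all incidence numbers between a
  cell and a codimension-one face are \<plusminus>1, i.e. 1 mod 2.\<close>
definition coboundary :: "'a set \<Rightarrow> 'a rel \<Rightarrow> nat \<Rightarrow> ('a \<Rightarrow> bool) \<Rightarrow> 'a \<Rightarrow> bool" where
  "coboundary P r k c y = odd (card {x \<in> cells P r k. (x, y) \<in> r \<and> c x})"

definition H1_Z2_vanishes :: "'a set \<Rightarrow> 'a rel \<Rightarrow> bool" where
  "H1_Z2_vanishes P r \<longleftrightarrow>
     (\<forall>c :: 'a \<Rightarrow> bool.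
        (\<forall>s \<in> cells P r 2. \<not> coboundary P r 1 c s) \<longrightarrow>
        (\<exists>f :: 'a \<Rightarrow> bool. \<forall>e \<in> cells P r 1. coboundary P r 0 f e = c e))"

definition bicoloring :: "'a set \<Rightarrow> 'a rel \<Rightarrow> ('a \<Rightarrow> bool) \<Rightarrow> bool" where
  "bicoloring P r col \<longleftrightarrow>
     (\<forall>e \<in> cells P r 1. \<forall>u \<in> cells P r 0. \<forall>v \<in> cells P r 0.
        (u, e) \<in> r \<and> (v, e) \<in> r \<and> u \<noteq> v \<longrightarrow> col u \<noteq> col v)"

end

theory Submission imports Defs begin

definition down :: "nat \<Rightarrow> nat list \<Rightarrow> nat list set" where
  "down n w = {v \<in> cube_elems n. cube_le v w}"

lemma cube1: "cube_elems 1 = set [[0],[1],[2]]"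
  unfolding cube_elems_def by (auto simp: length_Suc_conv)

lemma cube2: "cube_elems 2 = set [[0,0],[0,1],[0,2],[1,0],[1,1],[1,2],[2,0],[2,1],[2,2]]"
  unfolding cube_elems_def by (auto simp: length_Suc_conv numeral_2_eq_2)

lemma count1: "{w \<in> cube_elems 1. card (down 1 w) = 3^0} = {[0],[1]}"
  unfolding down_def cube1 set_filter[symmetric]
  by (simp add: cube_le_def I_le_def)

lemma count2: "{w \<in> cube_elems 2. card (down 2 w) = 3^1} = {[0,2],[1,2],[2,0],[2,1]}"
  unfolding down_def cube2 set_filter[symmetric]
  by (simp add: cube_le_def I_le_def)

lemma card_cube: "card (cube_elems k) = 3^k"
proof -
  have "cube_elems k = {xs. set xs \<subseteq> {0,1,2} \<and> length xs = k}" unfolding cube_elems_def by auto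
  then show ?thesis by (simp add: card_lists_length_eq numeral_3_eq_3)
qed

lemma cells_below:
  assumes po: "partial_order_on P r" and cub: "\<forall>x\<in>P. \<exists>n. cell_dim P r x n"
    and bij: "bij_betw f (order_ideal P r x) (cube_elems n)"
    and iso: "\<forall>z \<in> order_ideal P r x. \<forall>w \<in> order_ideal P r x. (z, w) \<in> r \<longleftrightarrow> cube_le (f z) (f w)"
  shows "card {z \<in> cells P r k. (z,x)\<in>r} = card {w\<in>cube_elems n. card (down n w) = 3^k}"
proof -
  let ?I = "order_ideal P r x"
  have tr: "trans r" using po by (simp add: partial_order_on_def preorder_on_def)
  have dimcard: "card (order_ideal P r z) = 3^m" if "cell_dim P r z m" for z m
    using that unfolding cell_dim_def by (metis bij_betw_same_card card_cube)
  have inj: "inj_on f ?I" using bij by (simp add: bij_betw_def)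
  have idz: "card (order_ideal P r z) = card (down n (f z))" if z: "z \<in> ?I" for z
  proof -
    have e1: "order_ideal P r z = {z'\<in>?I. (z',z)\<in>r}"
      using z tr unfolding order_ideal_def by (auto dest: transD)
    have e2: "f ` {z'\<in>?I. (z',z)\<in>r} = down n (f z)"
    proof
      show "f ` {z'\<in>?I. (z',z)\<in>r} \<subseteq> down n (f z)"
        using iso z bij unfolding down_def bij_betw_def by auto
      show "down n (f z) \<subseteq> f ` {z'\<in>?I. (z',z)\<in>r}"
      proof
        fix w assume w: "w \<in> down n (f z)"
        then have "w \<in> f ` ?I" using bij unfolding down_def bij_betw_def by auto
        then obtain z' where z': "z' \<in> ?I" "w = f z'" by auto
        then have "(z', z) \<in> r" using iso z w unfolding down_def by auto
        then show "w \<in> f ` {z'\<in>?I. (z',z)\<in>r}" using z' by auto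
      qed
    qed
    have "inj_on f {z'\<in>?I. (z',z)\<in>r}" using inj by (rule inj_on_subset) auto
    from card_image[OF this] show ?thesis unfolding e1 e2 by simp
  qed
  have seteq: "{z \<in> cells P r k. (z,x)\<in>r} = {z\<in>?I. card (down n (f z)) = 3^k}"
  proof
    show "{z \<in> cells P r k. (z,x)\<in>r} \<subseteq> {z\<in>?I. card (down n (f z)) = 3^k}"
    proof
      fix z assume "z \<in> {z \<in> cells P r k. (z,x)\<in>r}"
      then have c: "cell_dim P r z k" and zr: "(z,x)\<in>r" by (auto simp: cells_def)
      then have zI: "z \<in> ?I" unfolding order_ideal_def cell_dim_def by auto
      show "z \<in> {z\<in>?I. card (down n (f z)) = 3^k}" using zI idz[OF zI] dimcard[OF c] by simp
    qed
    show "{z\<in>?I. card (down n (f z)) = 3^k} \<subseteq> {z \<in> cells P r k. (z,x)\<in>r}"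
    proof
      fix z assume "z \<in> {z\<in>?I. card (down n (f z)) = 3^k}"
      then have zI: "z \<in> ?I" and cd: "card (down n (f z)) = 3^k" by auto
      then have zP: "z \<in> P" and zr: "(z,x)\<in>r" unfolding order_ideal_def by auto
      obtain m where c: "cell_dim P r z m" using cub zP by blast
      have "(3::nat)^m = 3^k" using dimcard[OF c] idz[OF zI] cd by simp
      then have "m = k" by simp
      then show "z \<in> {z \<in> cells P r k. (z,x)\<in>r}" using c zr by (simp add: cells_def)
    qed
  qed
  have img: "f ` {z\<in>?I. card (down n (f z)) = 3^k} = {w\<in>cube_elems n. card (down n w) = 3^k}"
    using bij unfolding bij_betw_def by auto
  have "inj_on f {z\<in>?I. card (down n (f z)) = 3^k}" using inj by (rule inj_on_subset) auto
  from card_image[OF this] show ?thesis unfolding seteq img by simp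
qed

theorem proposition2p1:
  fixes P :: "'a set" and r :: "'a rel"
  assumes "cubical_complex P r"
    and "H1_Z2_vanishes P r"
  shows "\<exists>col :: 'a \<Rightarrow> bool. bicoloring P r col"
proof -
  have po: "partial_order_on P r" and cub: "\<forall>x\<in>P. \<exists>n. cell_dim P r x n"
    using assms(1) unfolding cubical_complex_def cubical_poset_def by blast+
  have below: "card {z \<in> cells P r k. (z,x)\<in>r} = card {w\<in>cube_elems n. card (down n w) = 3^k}"
    if "x \<in> cells P r n" for x n k
  proof -
    from that obtain f where "bij_betw f (order_ideal P r x) (cube_elems n)"
      "\<forall>z \<in> order_ideal P r x. \<forall>w \<in> order_ideal P r x. (z, w) \<in> r \<longleftrightarrow> cube_le (f z) (f w)"
      by (auto simp: cells_def cell_dim_def)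
    then show ?thesis by (rule cells_below[OF po cub])
  qed
  have "\<forall>s \<in> cells P r 2. \<not> coboundary P r 1 (\<lambda>_. True) s"
  proof
    fix s assume "s \<in> cells P r 2"
    from below[OF this, of 1] have "card {z \<in> cells P r 1. (z,s)\<in>r} = 4"
      unfolding count2 by simp
    then show "\<not> coboundary P r 1 (\<lambda>_. True) s" by (simp add: coboundary_def)
  qed
  then obtain col where col: "\<forall>e \<in> cells P r 1. coboundary P r 0 col e"
    using assms(2) unfolding H1_Z2_vanishes_def by blast
  have "bicoloring P r col"
    unfolding bicoloring_def
  proof (intro ballI impI)
    fix e u v assume e: "e \<in> cells P r 1" and u: "u \<in> cells P r 0" and v: "v \<in> cells P r 0"
      and h: "(u, e) \<in> r \<and> (v, e) \<in> r \<and> u \<noteq> v"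
    let ?T = "{z \<in> cells P r 0. (z,e)\<in>r}"
    from below[OF e, of 0] have c2: "card ?T = 2" unfolding count1 by simp
    have sub: "{u, v} \<subseteq> ?T" using u v h by auto
    have fin: "finite ?T" using c2 card.infinite by (metis zero_neq_numeral)
    have "card {u,v} = 2" using h by simp
    then have T: "?T = {u, v}" using card_subset_eq[OF fin sub] c2 by simp
    have "odd (card {x \<in> ?T. col x})" using col e by (simp add: coboundary_def conj_assoc)
    then have od: "odd (card {x \<in> {u,v}. col x})" unfolding T .
    show "col u \<noteq> col v"
    proof
      assume eq: "col u = col v"
      then have "{x \<in> {u,v}. col x} = (if col u then {u,v} else {})" by auto
      then show False using od h by (simp split: if_splits)
    qed
  qed
  then show ?thesis by blast
qed

end
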